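(* Let $B$ be a unital commutative semi-simple Banach algebra with connected maximal ideal space $X$. Let $T$ be a unital endomorphism of $B$ which is a Riesz operator, induced by a selfmap $\phi$ of $X$, and suppose $\{x_0\}=\bigcap_{n=0}^\infty\phi_n(X)$. Then for each $\varepsilon>0$ there exists a positive integer $N$ such that $\phi_N(X)\subset B(x_0,\varepsilon)$.
   Context: The maximal ideal space $X$ of $B$ carries the weak-* (Gelfand) topology, and $\hat f$ denotes the Gelfand transform of $f\in B$. A unital endomorphism $T$ of $B$ is induced by a weak-* continuous selfmap $\phi$ of $X$ if $\widehat{Tf}(x)=\hat f(\phi(x))$ for all $f\in B$, $x\in X$; $\phi_n$ is the $n$-th iterate of $\phi$ ($\phi_0$ the identity). For $x,y\in X$, $\|x-y\|=\sup\{|\hat f(x)-\hat f(y)|: f\in B,\ \|f\|\le 1\}$ (the norm of $x-y$ in the dual $B^*$), and $B(a,\varepsilon)=\{x\in X:\|x-a\|<\varepsilon\}$. A bounded operator $T$ is a Riesz operator if $\lim_{n}\left[\inf\{\|T^n-K\|:K \text{ compact}\}\right]^{1/n}=0$. *)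

theory Defs
  imports "HOL-Analysis.Analysis"
begin

text \<open>A unital commutative complex Banach algebra: the carrier type is a real
unital normed algebra which is complete and commutative, equipped with a
complex scalar multiplication cs extending the real one, compatible with the
multiplication and absolutely homogeneous for the norm.\<close>

definition complex_banach_algebra ::
  "(complex \<Rightarrow> 'a::{comm_ring_1,real_normed_algebra_1,banach} \<Rightarrow> 'a) \<Rightarrow> bool" where
  "complex_banach_algebra cs \<longleftrightarrow>
     (\<forall>a. cs 1 a = a) \<and>
     (\<forall>c d a. cs c (cs d a) = cs (c * d) a) \<and>
     (\<forall>c a b. cs c (a + b) = cs c a + cs c b) \<and>
     (\<forall>c d a. cs (c + d) a = cs c a + cs d a) \<and>
     (\<forall>r a. cs (complex_of_real r) a = scaleR r a) \<and>
     (\<forall>c a b. cs c (a * b) = cs c a * b) \<and>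
     (\<forall>c a. norm (cs c a) = cmod c * norm a)"

definition clinear_map :: "(complex \<Rightarrow> 'a::{comm_ring_1,real_normed_algebra_1,banach} \<Rightarrow> 'a) \<Rightarrow> ('a \<Rightarrow> 'a) \<Rightarrow> bool" where
  "clinear_map cs T \<longleftrightarrow> (\<forall>a b. T (a + b) = T a + T b) \<and> (\<forall>c a. T (cs c a) = cs c (T a))"

text \<open>Characters (nonzero complex homomorphisms): the maximal ideal space.\<close>
definition characters :: "(complex \<Rightarrow> 'a::{comm_ring_1,real_normed_algebra_1,banach} \<Rightarrow> 'a) \<Rightarrow> ('a \<Rightarrow> complex) set" where
  "characters cs = {h. (\<forall>a b. h (a + b) = h a + h b) \<and> (\<forall>c a. h (cs c a) = c * h a)
                       \<and> (\<forall>a b. h (a * b) = h a * h b) \<and> h 1 = 1}"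

definition gelfand_topology :: "(complex \<Rightarrow> 'a::{comm_ring_1,real_normed_algebra_1,banach} \<Rightarrow> 'a) \<Rightarrow> ('a \<Rightarrow> complex) topology" where
  "gelfand_topology cs = subtopology (product_topology (\<lambda>_. euclidean) UNIV) (characters cs)"

definition semisimple :: "(complex \<Rightarrow> 'a::{comm_ring_1,real_normed_algebra_1,banach} \<Rightarrow> 'a) \<Rightarrow> bool" where
  "semisimple cs \<longleftrightarrow> (\<forall>f. (\<forall>h\<in>characters cs. h f = 0) \<longrightarrow> f = 0)"

definition bounded_op :: "('a::{comm_ring_1,real_normed_algebra_1,banach} \<Rightarrow> 'a) \<Rightarrow> bool" where
  "bounded_op T \<longleftrightarrow> (\<exists>C. \<forall>f. norm (T f) \<le> C * norm f)"

definition compact_op :: "(complex \<Rightarrow> 'a::{comm_ring_1,real_normed_algebra_1,banach} \<Rightarrow> 'a) \<Rightarrow> ('a \<Rightarrow> 'a) \<Rightarrow> bool" where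
  "compact_op cs K \<longleftrightarrow> clinear_map cs K \<and> compact (closure (K ` {f. norm f \<le> 1}))"

definition ess_norm_pow :: "(complex \<Rightarrow> 'a::{comm_ring_1,real_normed_algebra_1,banach} \<Rightarrow> 'a) \<Rightarrow> ('a \<Rightarrow> 'a) \<Rightarrow> nat \<Rightarrow> real" where
  "ess_norm_pow cs T n = Inf {onorm (\<lambda>f. (T ^^ n) f - K f) | K. compact_op cs K}"

definition riesz_operator :: "(complex \<Rightarrow> 'a::{comm_ring_1,real_normed_algebra_1,banach} \<Rightarrow> 'a) \<Rightarrow> ('a \<Rightarrow> 'a) \<Rightarrow> bool" where
  "riesz_operator cs T \<longleftrightarrow> clinear_map cs T \<and> bounded_op T \<and>
     (\<lambda>n. ess_norm_pow cs T n powr (1 / real n)) \<longlonglongrightarrow> 0"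

definition dual_dist :: "('a::{comm_ring_1,real_normed_algebra_1,banach} \<Rightarrow> complex) \<Rightarrow> ('a \<Rightarrow> complex) \<Rightarrow> real" where
  "dual_dist x y = Sup {cmod (x f - y f) | f. norm f \<le> 1}"

definition unital_endomorphism :: "(complex \<Rightarrow> 'a::{comm_ring_1,real_normed_algebra_1,banach} \<Rightarrow> 'a) \<Rightarrow> ('a \<Rightarrow> 'a) \<Rightarrow> bool" where
  "unital_endomorphism cs T \<longleftrightarrow> clinear_map cs T \<and> (\<forall>a b. T (a * b) = T a * T b) \<and> T 1 = 1"

definition induced_by :: "(complex \<Rightarrow> 'a::{comm_ring_1,real_normed_algebra_1,banach} \<Rightarrow> 'a) \<Rightarrow> ('a \<Rightarrow> 'a)
    \<Rightarrow> (('a \<Rightarrow> complex) \<Rightarrow> ('a \<Rightarrow> complex)) \<Rightarrow> bool" where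
  "induced_by cs T \<phi> \<longleftrightarrow>
     continuous_map (gelfand_topology cs) (gelfand_topology cs) \<phi> \<and>
     (\<forall>f. \<forall>x\<in>characters cs. x (T f) = \<phi> x f)"

end

theory Submission
  imports Defs
begin

lemma char_basic:
  assumes "h \<in> characters cs"
  shows "h 0 = 0" "h (- a) = - h a" "h (a - b) = h a - h b" "h (a + b) = h a + h b"
    "h (a * b) = h a * h b" "h 1 = 1" "h (cs c a) = c * h a"
proof -
  have add: "\<And>a b. h (a + b) = h a + h b" using assms by (simp add: characters_def)
  show "h (a + b) = h a + h b" by (rule add)
  show "h (a * b) = h a * h b" "h 1 = 1" "h (cs c a) = c * h a" using assms by (simp_all add: characters_def)
  have "h (0 + 0) = h 0 + h 0" by (rule add)
  then show z: "h 0 = 0" by simp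
  have n: "h (- u) = - h u" for u
  proof -
    have "h (u + - u) = h u + h (- u)" by (rule add)
    with z have "h u + h (- u) = 0" by simp
    then show ?thesis by (simp add: add_eq_0_iff)
  qed
  then show "h (- a) = - h a" .
  have "h (a + - b) = h a + h (- b)" by (rule add)
  then show "h (a - b) = h a - h b" by (simp only: diff_conv_add_uminus n)
qed

lemma char_bound:
  assumes cb: "complex_banach_algebra cs" and h: "h \<in> characters cs"
  shows "cmod (h a) \<le> norm a"
proof (rule ccontr)
  assume "\<not> cmod (h a) \<le> norm a"
  then have lt: "norm a < cmod (h a)" by simp
  define l where "l = h a"
  have l0: "l \<noteq> 0" using lt l_def by auto
  define b where "b = cs (1 / l) a"
  have hb: "h b = 1" using char_basic(7)[OF h] l0 by (simp add: b_def l_def)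
  have nb: "norm b < 1"
    using cb lt l0 unfolding b_def complex_banach_algebra_def l_def
    by (simp add: norm_divide divide_less_eq)
  have "summable (\<lambda>n. norm b ^ n)" using nb by (simp add: summable_geometric)
  then have sm: "summable (\<lambda>n. b ^ n)"
    by (rule summable_comparison_test'[where N=0]) (simp add: norm_power_ineq)
  define s where "s = suminf (\<lambda>n. b ^ n)"
  have s1: "(\<lambda>n. b ^ n) sums s" using sm s_def by (simp add: summable_sums)
  then have "(\<lambda>n. b * b ^ n) sums (b * s)" by (rule sums_mult)
  then have "(\<lambda>n. b ^ Suc n) sums (b * s)" by simp
  then have "(\<lambda>n. b ^ n) sums (b * s + b ^ 0)" by (subst (asm) sums_Suc_iff)
  then have "s = b * s + 1" using s1 sums_unique2 by fastforce
  then have "(1 - b) * s = 1" by (simp add: algebra_simps)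
  then have "h ((1 - b) * s) = 1" using char_basic(6)[OF h] by simp
  moreover have "h ((1 - b) * s) = 0"
    using char_basic[OF h] hb by simp
  ultimately show False by simp
qed

lemma closed_chars: "closed (characters cs)"
proof -
  have e: "characters cs = {h. \<forall>a b. h (a + b) = h a + h b} \<inter> {h. \<forall>c a. h (cs c a) = c * h a}
     \<inter> {h. \<forall>a b. h (a * b) = h a * h b} \<inter> {h. h 1 = 1}"
    by (auto simp: characters_def)
  show ?thesis unfolding e
    by (intro closed_Int closed_Collect_all closed_Collect_eq continuous_intros
        continuous_on_product_coordinates)
qed

lemma compact_chars:
  assumes cb: "complex_banach_algebra cs"
  shows "compact (characters cs)"
proof -
  have "compactin (product_topology (\<lambda>_. euclidean) UNIV) (PiE UNIV (\<lambda>a::'a. cball (0::complex) (norm a)))"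
    by (simp add: compactin_PiE)
  then have c: "compact (PiE UNIV (\<lambda>a::'a. cball (0::complex) (norm a)))"
    by (simp add: euclidean_product_topology)
  have "characters cs = PiE UNIV (\<lambda>a::'a. cball (0::complex) (norm a)) \<inter> characters cs"
    using char_bound[OF cb] by (auto simp: PiE_iff)
  then show ?thesis using compact_Int_closed[OF c closed_chars] by metis
qed


lemma clinear_scaleR:
  assumes cb: "complex_banach_algebra cs" and L: "clinear_map cs K"
  shows "K (scaleR r a) = scaleR r (K a)"
proof -
  have "scaleR r a = cs (complex_of_real r) a" "scaleR r (K a) = cs (complex_of_real r) (K a)"
    using cb by (simp_all add: complex_banach_algebra_def)
  then show ?thesis using L by (simp add: clinear_map_def)
qed

lemma T_bl:
  assumes cb: "complex_banach_algebra cs" and L: "clinear_map cs T" and B: "bounded_op T"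
  shows "bounded_linear T"
proof -
  obtain C where C: "\<And>f. norm (T f) \<le> C * norm f" using B by (auto simp: bounded_op_def)
  show ?thesis
    by (rule bounded_linear_intro[where K=C])
       (use L clinear_scaleR[OF cb L] C in \<open>auto simp: clinear_map_def mult.commute\<close>)
qed

lemma Tpow_bl:
  fixes T :: "'a::real_normed_vector \<Rightarrow> 'a"
  assumes "bounded_linear T"
  shows "bounded_linear (T ^^ n)"
proof (induction n)
  case 0
  show ?case unfolding funpow_0 id_def by (rule bounded_linear_ident)
next
  case (Suc n)
  have "bounded_linear (\<lambda>x. T ((T ^^ n) x))"
    using bounded_linear_compose[OF assms Suc] .
  then show ?case by (simp add: o_def)
qed

lemma K_bl:
  assumes cb: "complex_banach_algebra cs" and K: "compact_op cs K"
  shows "bounded_linear K"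
proof -
  have L: "clinear_map cs K" and c: "compact (closure (K ` {f. norm f \<le> 1}))"
    using K by (auto simp: compact_op_def)
  obtain B where B: "B > 0" "\<And>y. y \<in> closure (K ` {f. norm f \<le> 1}) \<Longrightarrow> norm y \<le> B"
    using compact_imp_bounded[OF c] by (auto simp: bounded_pos)
  have add: "\<And>a b. K (a + b) = K a + K b" using L by (simp add: clinear_map_def)
  have K0: "K 0 = 0" using add[of 0 0] by simp
  have bd: "norm (K f) \<le> norm f * B" for f
  proof (cases "f = 0")
    case True then show ?thesis using K0 by simp
  next
    case False
    define g where "g = scaleR (1 / norm f) f"
    have ng: "norm g \<le> 1" using False by (simp add: g_def)
    have "K g \<in> K ` {f. norm f \<le> 1}" using ng by simp
    then have "K g \<in> closure (K ` {f. norm f \<le> 1})" by (rule subsetD[OF closure_subset])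
    then have "norm (K g) \<le> B" by (rule B(2))
    have fe: "scaleR (norm f) g = f" using False by (simp add: g_def)
    have "K (scaleR (norm f) g) = scaleR (norm f) (K g)" by (rule clinear_scaleR[OF cb L])
    then have "K f = scaleR (norm f) (K g)" by (simp only: fe)
    then have "norm (K f) = norm f * norm (K g)" by simp
    also have "\<dots> \<le> norm f * B" using \<open>norm (K g) \<le> B\<close> by (simp add: mult_left_mono)
    finally show ?thesis .
  qed
  show ?thesis
    by (rule bounded_linear_intro[where K=B]) (use add clinear_scaleR[OF cb L] bd in auto)
qed

lemma zero_compact_op:
  assumes cb: "complex_banach_algebra cs"
  shows "compact_op cs (\<lambda>_. 0)"
proof -
  have "cs c 0 = 0" for c using cb by (simp add: complex_banach_algebra_def) (metis norm_zero mult_zero_right norm_eq_zero)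
  moreover have "(\<lambda>_. 0::'a) ` {f::'a. norm f \<le> 1} = {0}"
    by (auto simp: image_def intro!: exI[of _ "0::'a"])
  ultimately show ?thesis by (simp add: compact_op_def clinear_map_def)
qed

lemma riesz_small:
  assumes cb: "complex_banach_algebra cs" and R: "riesz_operator cs T"
    and d: "0 < d" "d < 1"
  obtains N K where "N > 0" "compact_op cs K" "onorm (\<lambda>f. (T ^^ N) f - K f) < d"
proof -
  have "(\<lambda>n. ess_norm_pow cs T n powr (1 / real n)) \<longlonglongrightarrow> 0" using R by (simp add: riesz_operator_def)
  from order_tendstoD(2)[OF this d(1)] obtain N0 where
    N0: "\<And>n. n \<ge> N0 \<Longrightarrow> ess_norm_pow cs T n powr (1 / real n) < d"
    by (auto simp: eventually_sequentially)
  define N where "N = Suc N0"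
  have "ess_norm_pow cs T N powr (1 / real N) < d" using N0[of N] N_def by simp
  have e: "ess_norm_pow cs T N < d"
  proof (rule ccontr)
    assume "\<not> ess_norm_pow cs T N < d"
    then have "d \<le> ess_norm_pow cs T N" by simp
    then have "d powr (1 / real N) \<le> ess_norm_pow cs T N powr (1 / real N)"
      using d by (intro powr_mono2) auto
    moreover have "d powr 1 \<le> d powr (1 / real N)"
      using d by (intro powr_mono') (auto simp: N_def)
    ultimately show False using \<open>ess_norm_pow cs T N powr (1 / real N) < d\<close> d by simp
  qed
  have ne: "{onorm (\<lambda>f. (T ^^ N) f - K f) | K. compact_op cs K} \<noteq> {}"
    using zero_compact_op[OF cb] by blast
  from cInf_lessD[OF ne] e obtain K where "compact_op cs K" "onorm (\<lambda>f. (T ^^ N) f - K f) < d"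
    by (auto simp: ess_norm_pow_def)
  then show ?thesis using that[of N K] N_def by simp
qed


lemma tri6:
  fixes a b c p q r s :: complex
  shows "cmod ((c + (a + (p + r))) - (c + (b + (q + s)))) \<le> cmod a + cmod b + cmod p + cmod q + cmod r + cmod s"
proof -
  have e: "(c + (a + (p + r))) - (c + (b + (q + s))) = (a + (p + r)) - (b + (q + s))" by simp
  show ?thesis unfolding e using norm_triangle_ineq4[of "a + (p + r)" "b + (q + s)"] norm_triangle_ineq[of a "p + r"]
    norm_triangle_ineq[of p r] norm_triangle_ineq[of b "q + s"] norm_triangle_ineq[of q s]
    by linarith
qed

theorem theorem1p2:
  fixes cs :: "complex \<Rightarrow> 'a::{comm_ring_1,real_normed_algebra_1,banach} \<Rightarrow> 'a"
    and T :: "'a \<Rightarrow> 'a"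
    and \<phi> :: "('a \<Rightarrow> complex) \<Rightarrow> ('a \<Rightarrow> complex)"
    and x0 :: "'a \<Rightarrow> complex"
  assumes "complex_banach_algebra cs"
    and "semisimple cs"
    and "connected_space (gelfand_topology cs)"
    and "unital_endomorphism cs T"
    and "riesz_operator cs T"
    and "induced_by cs T \<phi>"
    and "{x0} = (\<Inter>n. (\<phi> ^^ n) ` characters cs)"
  shows "\<forall>\<epsilon>>0. \<exists>N>0. (\<phi> ^^ N) ` characters cs \<subseteq> {x \<in> characters cs. dual_dist x x0 < \<epsilon>}"
proof (intro allI impI)
  fix \<epsilon> :: real assume ep: "\<epsilon> > 0"
  note cb = assms(1)
  define X where "X = characters cs"
  have gt: "gelfand_topology cs = top_of_set X"
    by (simp add: gelfand_topology_def X_def euclidean_product_topology)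
  have phic: "continuous_on X \<phi>" and phiX: "\<phi> ` X \<subseteq> X"
    and phiT: "\<And>f x. x \<in> X \<Longrightarrow> \<phi> x f = x (T f)"
    using assms(6) by (auto simp: induced_by_def gt X_def)
  have pX: "(\<phi> ^^ n) ` X \<subseteq> X" for n
    by (induction n) (use phiX in auto)
  have pT: "x \<in> X \<Longrightarrow> (\<phi> ^^ n) x f = x ((T ^^ n) f)" for n x f
  proof (induction n arbitrary: f)
    case 0 then show ?case by simp
  next
    case (Suc n)
    have "(\<phi> ^^ n) x \<in> X" using pX Suc.prems by blast
    then have "(\<phi> ^^ Suc n) x f = (\<phi> ^^ n) x (T f)" using phiT by simp
    also have "\<dots> = x ((T ^^ n) (T f))" using Suc by simp
    also have "\<dots> = x ((T ^^ Suc n) f)" by (simp only: funpow_Suc_right comp_apply)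
    finally show ?case .
  qed
  have pc: "continuous_on X (\<phi> ^^ n)" for n
  proof (induction n)
    case 0 then show ?case by (simp add: id_def)
  next
    case (Suc n)
    have "continuous_on ((\<phi> ^^ n) ` X) \<phi>" by (rule continuous_on_subset[OF phic pX])
    then have "continuous_on X (\<phi> \<circ> (\<phi> ^^ n))" by (rule continuous_on_compose[OF Suc])
    then show ?case by simp
  qed
  have cX: "compact X" using compact_chars[OF cb] X_def by simp
  have Hs: "Hausdorff_space (euclidean :: ('a \<Rightarrow> complex) topology)"
    using Hausdorff_space_product_topology[of "\<lambda>_. (euclidean :: complex topology)" UNIV]
    by (simp add: euclidean_product_topology)
  have pcomp: "compact ((\<phi> ^^ n) ` X)" for n
    using compact_continuous_image[OF pc cX] .
  have pclosed: "closed ((\<phi> ^^ n) ` X)" for n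
  proof -
    have "compactin euclidean ((\<phi> ^^ n) ` X)" using pcomp[of n] by simp
    then have "closedin euclidean ((\<phi> ^^ n) ` X)" by (rule compactin_imp_closedin[OF Hs])
    then show ?thesis by (simp only: closed_closedin)
  qed
  have pmono: "n \<le> m \<Longrightarrow> (\<phi> ^^ m) ` X \<subseteq> (\<phi> ^^ n) ` X" for n m
  proof -
    assume "n \<le> m"
    then obtain k where m: "m = n + k" using le_Suc_ex by blast
    have "(\<phi> ^^ m) ` X = (\<phi> ^^ n) ` ((\<phi> ^^ k) ` X)" by (simp add: m funpow_add image_comp)
    then show ?thesis using pX by blast
  qed
  have x0I: "x0 \<in> (\<Inter>n. (\<phi> ^^ n) ` characters cs)" unfolding assms(7)[symmetric] by simp
  have x0in: "x0 \<in> (\<phi> ^^ n) ` X" for n using INT_D[OF x0I UNIV_I, of n] X_def by simp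
  have x0X: "x0 \<in> X" using x0in[of 0] by simp
  have cbX: "\<And>x a. x \<in> X \<Longrightarrow> cmod (x a) \<le> norm a" using char_bound[OF cb] X_def by blast
  have Tl: "clinear_map cs T" and Tb: "bounded_op T"
    using assms(5) by (auto simp: riesz_operator_def)
  have Tbl: "bounded_linear T" using T_bl[OF cb Tl Tb] .
  define d where "d = min (\<epsilon> / 8) (1/2)"
  have d: "0 < d" "d < 1" "d \<le> \<epsilon> / 8" using ep by (auto simp: d_def)
  obtain N K where N: "N > 0" and K: "compact_op cs K"
    and oK: "onorm (\<lambda>f. (T ^^ N) f - K f) < d"
    using riesz_small[OF cb assms(5) d(1) d(2)] by blast
  define D where "D = (\<lambda>f. (T ^^ N) f - K f)"
  have Dbl: "bounded_linear D" unfolding D_def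
    using bounded_linear_sub[OF Tpow_bl[OF Tbl] K_bl[OF cb K]] .
  have Dbd: "norm f \<le> 1 \<Longrightarrow> norm (D f) \<le> d" for f
  proof -
    assume f: "norm f \<le> 1"
    have "norm (D f) \<le> onorm D * norm f" using onorm[OF Dbl] .
    also have "\<dots> \<le> onorm D" using f onorm_pos_le[OF Dbl] by (simp add: mult_left_le)
    finally show ?thesis using oK D_def by simp
  qed
  define S where "S = closure (K ` {f. norm f \<le> 1})"
  have cS: "compact S" using K by (simp add: compact_op_def S_def)
  obtain G where G: "G \<subseteq> S" "finite G" "S \<subseteq> (\<Union>g\<in>G. ball g (\<epsilon> / 8))"
    using compactE_image[OF cS, of S "\<lambda>g. ball g (\<epsilon> / 8)"] ep by force
  define U where "U = (\<Inter>g\<in>G. {x::'a \<Rightarrow> complex. cmod (x g - x0 g) < \<epsilon> / 8})"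
  have oU: "open U" unfolding U_def
    by (intro open_INT G(2) ballI open_Collect_less continuous_intros continuous_on_product_coordinates)
  have x0U: "x0 \<in> U" using ep by (simp add: U_def)
  have I0: "(\<Inter>i\<in>UNIV. (\<phi> ^^ i) ` X) = {x0}" unfolding X_def by (rule assms(7)[symmetric])
  have empty: "(X \<inter> - U) \<inter> (\<Inter>i\<in>UNIV. (\<phi> ^^ i) ` X) = {}"
    unfolding I0 using x0U by blast
  have csU: "compact (X \<inter> - U)" by (rule compact_Int_closed[OF cX closed_Compl[OF oU]])
  have "\<exists>I'. finite I' \<and> (X \<inter> - U) \<inter> (\<Inter>i\<in>I'. (\<phi> ^^ i) ` X) = {}"
  proof (rule ccontr)
    assume na: "\<not> ?thesis"
    have "(X \<inter> - U) \<inter> (\<Inter>i\<in>UNIV. (\<phi> ^^ i) ` X) \<noteq> {}"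
      by (rule compact_imp_fip_image[OF csU pclosed]) (use na in blast)
    with empty show False by contradiction
  qed
  then obtain I' where I': "finite I'" "(X \<inter> - U) \<inter> (\<Inter>i\<in>I'. (\<phi> ^^ i) ` X) = {}"
    by (elim exE conjE)
  define M where "M = Max (insert 0 I')"
  have Msub: "(\<phi> ^^ M) ` X \<subseteq> (\<Inter>i\<in>I'. (\<phi> ^^ i) ` X)"
  proof (rule INT_greatest)
    fix i assume i: "i \<in> I'"
    have "i \<le> M" unfolding M_def using I'(1) i by (intro Max_ge) auto
    then show "(\<phi> ^^ M) ` X \<subseteq> (\<phi> ^^ i) ` X" by (rule pmono)
  qed
  have MU: "(\<phi> ^^ M) ` X \<subseteq> U"
  proof
    fix x assume xa: "x \<in> (\<phi> ^^ M) ` X"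
    have xX: "x \<in> X" using xa pX[of M] by (rule subsetD[rotated])
    have xI: "x \<in> (\<Inter>i\<in>I'. (\<phi> ^^ i) ` X)" using xa Msub by (rule subsetD[rotated])
    show "x \<in> U"
    proof (rule ccontr)
      assume "x \<notin> U"
      then have "x \<in> (X \<inter> - U) \<inter> (\<Inter>i\<in>I'. (\<phi> ^^ i) ` X)"
        using xX xI \<open>x \<notin> U\<close> by (simp only: Int_iff Compl_iff simp_thms)
      then show False using I'(2) by simp
    qed
  qed
  show "\<exists>N>0. (\<phi> ^^ N) ` characters cs \<subseteq> {x \<in> characters cs. dual_dist x x0 < \<epsilon>}"
  proof (intro exI conjI)
    show "N + M > 0" using N by simp
    show "(\<phi> ^^ (N + M)) ` characters cs \<subseteq> {x \<in> characters cs. dual_dist x x0 < \<epsilon>}"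
    proof
      fix z assume "z \<in> (\<phi> ^^ (N + M)) ` characters cs"
      then obtain w where w: "w \<in> X" "z = (\<phi> ^^ N) ((\<phi> ^^ M) w)"
        by (auto simp: X_def funpow_add)
      define x where "x = (\<phi> ^^ M) w"
      have xM: "x \<in> (\<phi> ^^ M) ` X" unfolding x_def using w(1) by (rule imageI)
      have xX: "x \<in> X" using xM pX[of M] by (rule subsetD[rotated])
      have xU: "x \<in> U" using xM MU by (rule subsetD[rotated])
      obtain w' where w': "w' \<in> X" "x0 = (\<phi> ^^ N) ((\<phi> ^^ M) w')"
        using x0in[of "N + M"] by (auto simp: funpow_add)
      define y where "y = (\<phi> ^^ M) w'"
      have yM: "y \<in> (\<phi> ^^ M) ` X" unfolding y_def using w'(1) by (rule imageI)
      have yX: "y \<in> X" using yM pX[of M] by (rule subsetD[rotated])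
      have yU: "y \<in> U" using yM MU by (rule subsetD[rotated])
      have "z = (\<phi> ^^ N) x" using w(2) x_def by simp
      then have "z \<in> (\<phi> ^^ N) ` X" using xX by (rule image_eqI)
      then have zX: "z \<in> X" using pX[of N] by (rule subsetD[rotated])
      have bnd: "cmod (z f - x0 f) \<le> 3 * \<epsilon> / 4" if f: "norm f \<le> 1" for f
      proof -
        have zf: "z f = x ((T ^^ N) f)" using pT xX w x_def by simp
        have x0f: "x0 f = y ((T ^^ N) f)" using pT yX w' y_def by simp
        have "K f \<in> K ` {f. norm f \<le> 1}" using f by simp
        then have KS: "K f \<in> S" unfolding S_def by (rule subsetD[OF closure_subset])
        then have "K f \<in> (\<Union>g\<in>G. ball g (\<epsilon> / 8))" by (rule subsetD[OF G(3)])
        then obtain g where g1: "g \<in> G" and g2: "K f \<in> ball g (\<epsilon> / 8)" by (rule UN_E)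
        from g2 have g: "g \<in> G" "norm (g - K f) < \<epsilon> / 8" using g1 by (simp_all add: dist_norm)
        have TN: "(T ^^ N) f = D f + K f" by (simp add: D_def)
        have xe: "x ((T ^^ N) f) = x0 g + (x (D f) + (x (K f - g) + (x g - x0 g)))" 
          using char_basic[of x cs] xX X_def TN by simp
        have ye: "y ((T ^^ N) f) = x0 g + (y (D f) + (y (K f - g) + (y g - x0 g)))" 
          using char_basic[of y cs] yX X_def TN by simp
        have "cmod (x (D f)) \<le> d" using cbX[OF xX, of "D f"] Dbd[OF f] by linarith
        moreover have "cmod (y (D f)) \<le> d" using cbX[OF yX, of "D f"] Dbd[OF f] by linarith
        moreover have "cmod (x (K f - g)) < \<epsilon> / 8"
          using cbX[OF xX, of "K f - g"] g(2) by (simp add: norm_minus_commute)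
        moreover have "cmod (y (K f - g)) < \<epsilon> / 8"
          using cbX[OF yX, of "K f - g"] g(2) by (simp add: norm_minus_commute)
        moreover have "cmod (x g - x0 g) < \<epsilon> / 8" using xU g(1) U_def by auto
        moreover have "cmod (y g - x0 g) < \<epsilon> / 8" using yU g(1) U_def by auto
        moreover have "cmod (z f - x0 f) \<le> cmod (x (D f)) + cmod (y (D f)) + cmod (x (K f - g))
            + cmod (y (K f - g)) + cmod (x g - x0 g) + cmod (y g - x0 g)"
          unfolding zf x0f xe ye by (rule tri6)
        ultimately show ?thesis using d by linarith
      qed
      have "dual_dist z x0 \<le> 3 * \<epsilon> / 4"
        unfolding dual_dist_def
        by (rule cSup_least) (use bnd in \<open>auto intro: exI[of _ 0]\<close>)
      then show "z \<in> {x \<in> characters cs. dual_dist x x0 < \<epsilon>}" using zX ep X_def by auto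
    qed
  qed
qed

end
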